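(* Let $\mathbf L=(L,\vee,\wedge,0,1)$ be a complemented modular lattice with $0\ne1$ and let $\Phi$ be a congruence of the semilattice $(L,\wedge)$. Then: (i) $[1]\Phi$ is a deductive system of $\mathbf L$; (ii) $\Theta([1]\Phi)\subseteq\Phi$.
   Context: For $a\in L$, $a^+:=\{x\in L\mid a\vee x=1,\ a\wedge x=0\}$ (the set of all complements of $a$), and $a\to b:=\{x\vee(a\wedge b)\mid x\in a^+\}$. A deductive system of $\mathbf L$ is a subset $D\subseteq L$ such that $1\in D$, and whenever $a\in D$, $b\in L$ and $a\to b\subseteq D$, then $b\in D$. For a deductive system $D$, $\Theta(D):=\{(x,y)\in L^2\mid x\to y\subseteq D\text{ and }y\to x\subseteq D\}$. $[1]\Phi$ denotes the $\Phi$-class of $1$. *)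

theory Defs
  imports Main
begin

definition modular_lat :: "'a::bounded_lattice itself \<Rightarrow> bool" where
  "modular_lat _ \<longleftrightarrow> (\<forall>x y z :: 'a. x \<le> z \<longrightarrow> sup x (inf y z) = inf (sup x y) z)"

definition complements :: "'a::bounded_lattice \<Rightarrow> 'a set" where
  "complements a = {x. sup a x = top \<and> inf a x = bot}"

definition complemented_lat :: "'a::bounded_lattice itself \<Rightarrow> bool" where
  "complemented_lat _ \<longleftrightarrow> (\<forall>a :: 'a. complements a \<noteq> {})"

definition limp :: "'a::bounded_lattice \<Rightarrow> 'a \<Rightarrow> 'a set" where
  "limp a b = {sup x (inf a b) | x. x \<in> complements a}"

definition deductive_system :: "'a::bounded_lattice set \<Rightarrow> bool" where
  "deductive_system D \<longleftrightarrow> top \<in> D \<and> (\<forall>a b. a \<in> D \<and> limp a b \<subseteq> D \<longrightarrow> b \<in> D)"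

definition Theta :: "'a::bounded_lattice set \<Rightarrow> ('a \<times> 'a) set" where
  "Theta D = {(x, y). limp x y \<subseteq> D \<and> limp y x \<subseteq> D}"

definition meet_congruence :: "('a::bounded_lattice \<times> 'a) set \<Rightarrow> bool" where
  "meet_congruence \<Phi> \<longleftrightarrow> equiv UNIV \<Phi> \<and>
     (\<forall>a b c d. (a, b) \<in> \<Phi> \<and> (c, d) \<in> \<Phi> \<longrightarrow> (inf a c, inf b d) \<in> \<Phi>)"

end

theory Submission
  imports Defs
begin

lemma key:
  fixes a b c :: "'a::bounded_lattice"
  assumes m: "modular_lat TYPE('a)" and c: "c \<in> complements a"
  shows "inf a (sup c (inf a b)) = inf a b"
proof -
  have "sup (inf a b) (inf c a) = inf (sup (inf a b) c) a"
    using m unfolding modular_lat_def by (metis inf_le1)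
  moreover have "inf c a = bot" using c unfolding complements_def by (simp add: inf_commute)
  ultimately show ?thesis by (simp add: inf_commute sup_commute)
qed

theorem proposition8:
  fixes \<Phi> :: "('a::bounded_lattice \<times> 'a) set"
  assumes "modular_lat TYPE('a)"
    and "complemented_lat TYPE('a)"
    and "(bot::'a) \<noteq> top"
    and "meet_congruence \<Phi>"
  shows "deductive_system (\<Phi> `` {top}) \<and> Theta (\<Phi> `` {top}) \<subseteq> \<Phi>"
proof -
  have eq: "equiv UNIV \<Phi>" and cg: "\<And>a b c d. (a, b) \<in> \<Phi> \<Longrightarrow> (c, d) \<in> \<Phi> \<Longrightarrow> (inf a c, inf b d) \<in> \<Phi>"
    using assms(4) unfolding meet_congruence_def by auto
  have refl: "\<And>x. (x,x) \<in> \<Phi>" using eq by (simp add: equiv_def refl_on_def)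
  have sym: "\<And>x y. (x,y) \<in> \<Phi> \<Longrightarrow> (y,x) \<in> \<Phi>" using eq by (meson equiv_def symD)
  have tr: "\<And>x y z. (x,y) \<in> \<Phi> \<Longrightarrow> (y,z) \<in> \<Phi> \<Longrightarrow> (x,z) \<in> \<Phi>" using eq by (meson equiv_def transD)
  have ex: "\<And>a::'a. \<exists>c. c \<in> complements a" using assms(2) unfolding complemented_lat_def by blast
  have core: "(inf a b, a) \<in> \<Phi>" if "limp a b \<subseteq> \<Phi> `` {top}" for a b :: 'a
  proof -
    obtain c where c: "c \<in> complements a" using ex by blast
    have "sup c (inf a b) \<in> limp a b" using c unfolding limp_def by blast
    hence "(top, sup c (inf a b)) \<in> \<Phi>" using that by blast
    hence "(inf a top, inf a (sup c (inf a b))) \<in> \<Phi>" using cg refl by blast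
    hence "(a, inf a b) \<in> \<Phi>" using key[OF assms(1) c] by simp
    thus ?thesis using sym by blast
  qed
  have ds: "deductive_system (\<Phi> `` {top})"
    unfolding deductive_system_def
  proof (intro conjI allI impI)
    show "top \<in> \<Phi> `` {top}" using refl by blast
  next
    fix a b :: 'a
    assume h: "a \<in> \<Phi> `` {top} \<and> limp a b \<subseteq> \<Phi> `` {top}"
    have ta: "(top, a) \<in> \<Phi>" using h by blast
    have "(inf a b, a) \<in> \<Phi>" using core h by blast
    hence t1: "(top, inf a b) \<in> \<Phi>" using ta tr sym by blast
    have "(inf b top, inf b (inf a b)) \<in> \<Phi>" using cg refl t1 by blast
    hence "(b, inf a b) \<in> \<Phi>" by (simp add: inf_commute inf_left_commute)
    thus "b \<in> \<Phi> `` {top}" using t1 tr sym by blast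
  qed
  have th: "Theta (\<Phi> `` {top}) \<subseteq> \<Phi>"
  proof
    fix p assume "p \<in> Theta (\<Phi> `` {top})"
    then obtain x y where p: "p = (x,y)" and h1: "limp x y \<subseteq> \<Phi> `` {top}" and h2: "limp y x \<subseteq> \<Phi> `` {top}"
      unfolding Theta_def by blast
    have 1: "(inf x y, x) \<in> \<Phi>" using core h1 by blast
    have 2: "(inf y x, y) \<in> \<Phi>" using core h2 by blast
    have "(x, y) \<in> \<Phi>" using 1 2 sym tr by (metis inf_commute)
    thus "p \<in> \<Phi>" using p by simp
  qed
  show ?thesis using ds th by blast
qed

end
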